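(* Let $\boldsymbol\mu\in\mathbb R^N$ with $\boldsymbol\mu>\mathbf 0$, and assume that $\mathbf I-\mathbf G$ is irreducible for every $\mathbf G\in\mathcal G(\boldsymbol\mu)$. Then there exists $\mathbf p\in\mathbb R^N$, $\mathbf p\geq\mathbf 0$, with $\mathbf A(\boldsymbol\mu)\mathbf p\geq\mathbf n(\boldsymbol\mu)$ if and only if $\max_{\mathbf G\in\mathcal G(\boldsymbol\mu)}\lambda(\mathbf I-\mathbf G)<1$.
   Context: Multicast system: $N\geq 2$ transmitters $T_1,\dots,T_N$; transmitter $T_i$ has $K_i\geq1$ receivers $R_i^{k}$, $k\in\mathcal K_i=\{1,\dots,K_i\}$; $K=\sum_i K_i$. Channel gains $g_{r_i^{k},t_j}\geq 0$ (from $T_j$ to $R_i^k$) with $g_{r_i^{k},t_i}>0$; noise variance $\sigma^2>0$. For $\boldsymbol\mu\in\mathbb R^N$, let $\mathbf a_i^{k}(\boldsymbol\mu)\in\mathbb R^{1\times N}$ be the row vector whose $i$-th entry is $1$ and whose $j$-th entry, $j\neq i$, is $-\mu_i\, g_{r_i^{k},t_j}/g_{r_i^{k},t_i}$, and let $n_i^{k}(\boldsymbol\mu)=\mu_i\sigma^2/g_{r_i^{k},t_i}$. $\mathbf A(\boldsymbol\mu)\in\mathbb R^{K\times N}$ is the matrix whose rows are all $\mathbf a_i^{k}(\boldsymbol\mu)$ ($i=1,\dots,N$, $k\in\mathcal K_i$), and $\mathbf n(\boldsymbol\mu)\in\mathbb R^K$ the vector of the corresponding $n_i^k(\boldsymbol\mu)$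 in the same order. $\mathcal G(\boldsymbol\mu)$ is the set of all $N\times N$ matrices whose $i$-th row is $\mathbf a_i^{k_i}(\boldsymbol\mu)$ for some choice $k_i\in\mathcal K_i$, $i=1,\dots,N$ (the "embedded unicast systems"). For a nonnegative square matrix $\mathbf X$, $\lambda(\mathbf X)$ denotes its Perron–Frobenius eigenvalue (spectral radius). Inequalities are componentwise; $\boldsymbol\mu>\mathbf 0$ means all entries positive. *)

theory Defs
  imports "Jordan_Normal_Form.Spectral_Radius"
begin

(* Indexing conventions (0-based):
   transmitters T_i, i < N;  receivers R_i^k of T_i, k < K i;
   g i k j = channel gain g_{r_i^k, t_j} (from T_j to receiver R_i^k). *)

definition a_entry :: "(nat \<Rightarrow> nat \<Rightarrow> nat \<Rightarrow> real) \<Rightarrow> real vec \<Rightarrow> nat \<Rightarrow> nat \<Rightarrow> nat \<Rightarrow> real" where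
  "a_entry g mu i k j = (if j = i then 1 else - (mu $ i) * g i k j / g i k i)"

definition n_entry :: "(nat \<Rightarrow> nat \<Rightarrow> nat \<Rightarrow> real) \<Rightarrow> real \<Rightarrow> real vec \<Rightarrow> nat \<Rightarrow> nat \<Rightarrow> real" where
  "n_entry g sigma2 mu i k = mu $ i * sigma2 / g i k i"

definition rx_list :: "nat \<Rightarrow> (nat \<Rightarrow> nat) \<Rightarrow> (nat \<times> nat) list" where
  "rx_list N K = concat (map (\<lambda>i. map (\<lambda>k. (i, k)) [0..<K i]) [0..<N])"

definition A_mat :: "nat \<Rightarrow> (nat \<Rightarrow> nat) \<Rightarrow> (nat \<Rightarrow> nat \<Rightarrow> nat \<Rightarrow> real) \<Rightarrow> real vec \<Rightarrow> real mat" where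
  "A_mat N K g mu = mat (length (rx_list N K)) N
     (\<lambda>(r, j). case rx_list N K ! r of (i, k) \<Rightarrow> a_entry g mu i k j)"

definition n_vec :: "nat \<Rightarrow> (nat \<Rightarrow> nat) \<Rightarrow> (nat \<Rightarrow> nat \<Rightarrow> nat \<Rightarrow> real) \<Rightarrow> real \<Rightarrow> real vec \<Rightarrow> real vec" where
  "n_vec N K g sigma2 mu = vec (length (rx_list N K))
     (\<lambda>r. case rx_list N K ! r of (i, k) \<Rightarrow> n_entry g sigma2 mu i k)"

definition G_set :: "nat \<Rightarrow> (nat \<Rightarrow> nat) \<Rightarrow> (nat \<Rightarrow> nat \<Rightarrow> nat \<Rightarrow> real) \<Rightarrow> real vec \<Rightarrow> real mat set" where
  "G_set N K g mu = {mat N N (\<lambda>(i, j). a_entry g mu i (c i) j) | c. \<forall>i<N. c i < K i}"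

definition vec_le :: "real vec \<Rightarrow> real vec \<Rightarrow> bool" where
  "vec_le x y \<longleftrightarrow> dim_vec x = dim_vec y \<and> (\<forall>r<dim_vec x. x $ r \<le> y $ r)"

definition irreducible_mat :: "real mat \<Rightarrow> bool" where
  "irreducible_mat X \<longleftrightarrow> dim_row X = dim_col X \<and>
     (\<forall>i<dim_row X. \<forall>j<dim_row X.
        (i, j) \<in> {(a, b). a < dim_row X \<and> b < dim_row X \<and> X $$ (a, b) \<noteq> 0}\<^sup>+)"

definition pf_lambda :: "real mat \<Rightarrow> real" where
  "pf_lambda X = spectral_radius (map_mat complex_of_real X)"

end

theory Submission imports Defs begin

lemma smult_pow_mat': fixes A :: "'a :: comm_ring_1 mat" assumes "A \<in> carrier_mat n n"
  shows "(a \<cdot>\<^sub>m A) ^\<^sub>m k = (a ^ k) \<cdot>\<^sub>m (A ^\<^sub>m k)"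
proof (induct k)
  case 0 show ?case using assms by (auto simp: eq_matI)
next
  case (Suc k)
  have "(a \<cdot>\<^sub>m A) ^\<^sub>m Suc k = ((a ^ k) \<cdot>\<^sub>m (A ^\<^sub>m k)) * (a \<cdot>\<^sub>m A)" using Suc by simp
  also have "\<dots> = (a ^ Suc k) \<cdot>\<^sub>m (A ^\<^sub>m Suc k)" using assms
  proof -
    have Ak: "A ^\<^sub>m k \<in> carrier_mat n n" using assms by simp
    have "((a ^ k) \<cdot>\<^sub>m (A ^\<^sub>m k)) * (a \<cdot>\<^sub>m A) = (a ^ k) \<cdot>\<^sub>m ((A ^\<^sub>m k) * (a \<cdot>\<^sub>m A))"
      by (rule mult_smult_assoc_mat[OF Ak smult_carrier_mat[OF assms]])
    also have "(A ^\<^sub>m k) * (a \<cdot>\<^sub>m A) = a \<cdot>\<^sub>m (A ^\<^sub>m k * A)" using mult_smult_distrib[OF Ak assms] .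
    finally show ?thesis by (intro eq_matI, insert assms, auto simp: mult.commute)
  qed
  finally show ?case .
qed

lemma pow_decay:
  fixes B :: "real mat"
  assumes B: "B \<in> carrier_mat n n" and sr: "pf_lambda B < 1"
  shows "\<exists>c s. 0 \<le> s \<and> s < 1 \<and> (\<forall>k i j. i < n \<longrightarrow> j < n \<longrightarrow> \<bar>(B ^\<^sub>m k) $$ (i,j)\<bar> \<le> c * s ^ k)"
proof (cases "n = 0")
  case True thus ?thesis by (intro exI[of _ 0] exI[of _ 0]) auto
next
  case False
  hence n: "n > 0" by auto
  define C where "C = map_mat complex_of_real B"
  have C: "C \<in> carrier_mat n n" using B unfolding C_def by auto
  have srC: "spectral_radius C < 1" using sr unfolding pf_lambda_def C_def by simp
  have sr0: "spectral_radius C \<ge> 0"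
    using spectral_radius_mem_max(1)[OF C n] by auto
  define s where "s = (spectral_radius C + 1) / 2"
  have s: "0 < s" "s < 1" "spectral_radius C < s" using sr0 srC unfolding s_def by auto
  define D where "D = (complex_of_real (1/s)) \<cdot>\<^sub>m C"
  have D: "D \<in> carrier_mat n n" using C unfolding D_def by auto
  have "spectral_radius D < 1"
  proof -
    from spectral_radius_mem_max(1)[OF D n] obtain e where e: "e \<in> spectrum D"
      and eq: "spectral_radius D = cmod e" by auto
    from e obtain v where ev: "eigenvector D v e" unfolding spectrum_def eigenvalue_def by auto
    hence v: "v \<in> carrier_vec n" "v \<noteq> 0\<^sub>v n" and Dv: "D *\<^sub>v v = e \<cdot>\<^sub>v v"
      unfolding eigenvector_def using D by auto
    have "C *\<^sub>v v = (complex_of_real s * e) \<cdot>\<^sub>v v"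
    proof -
      have "C = complex_of_real s \<cdot>\<^sub>m D" unfolding D_def using s
        by (auto intro!: eq_matI simp: of_real_divide[symmetric])
      hence "C *\<^sub>v v = complex_of_real s \<cdot>\<^sub>v (D *\<^sub>v v)" using D v by (intro eq_vecI) auto
      thus ?thesis using Dv by (simp add: smult_smult_assoc)
    qed
    hence "eigenvector C v (complex_of_real s * e)" using v C unfolding eigenvector_def by auto
    hence "cmod (complex_of_real s * e) \<in> cmod ` spectrum C"
      unfolding spectrum_def eigenvalue_def by auto
    from spectral_radius_mem_max(2)[OF C n this]
    have "s * cmod e \<le> spectral_radius C" using s by (simp add: norm_mult)
    hence "s * cmod e < s * 1" using s by linarith
    hence "cmod e < 1" using s(1) by (simp only: mult_less_cancel_left_pos)
    thus ?thesis using eq by simp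
  qed
  from spectral_radius_jnf_norm_bound_less_1_upper_triangular[OF D this]
  obtain c where c: "\<And>k. norm_bound (D ^\<^sub>m k) c" by auto
  show ?thesis
  proof (rule exI[of _ c], rule exI[of _ s], intro conjI allI impI)
    fix k i j assume ij: "i < n" "j < n"
    have "D ^\<^sub>m k = complex_of_real ((1/s)^k) \<cdot>\<^sub>m (map_mat complex_of_real (B ^\<^sub>m k))"
    proof -
      have "D ^\<^sub>m k = complex_of_real (1/s) ^ k \<cdot>\<^sub>m C ^\<^sub>m k" unfolding D_def by (rule smult_pow_mat'[OF C])
      also have "C ^\<^sub>m k = map_mat complex_of_real (B ^\<^sub>m k)" unfolding C_def by (rule of_real_hom.mat_hom_pow[OF B, symmetric])
      finally show ?thesis by simp
    qed
    hence eqD: "(D ^\<^sub>m k) $$ (i,j) = complex_of_real ((1/s)^k * (B ^\<^sub>m k) $$ (i,j))"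
      using ij B by simp
    have "norm ((D ^\<^sub>m k) $$ (i,j)) \<le> c" using c[of k] ij D unfolding norm_bound_def by auto
    hence "norm (complex_of_real ((1/s)^k * (B ^\<^sub>m k) $$ (i,j))) \<le> c" unfolding eqD .
    hence "\<bar>(1/s)^k * (B ^\<^sub>m k) $$ (i,j)\<bar> \<le> c" by (simp only: norm_of_real)
    hence "(1/s)^k * \<bar>(B ^\<^sub>m k) $$ (i,j)\<bar> \<le> c" using s by (simp add: abs_mult)
    hence "s^k * ((1/s)^k * \<bar>(B ^\<^sub>m k) $$ (i,j)\<bar>) \<le> s^k * c" using s by (intro mult_left_mono) auto
    thus "\<bar>(B ^\<^sub>m k) $$ (i,j)\<bar> \<le> c * s ^ k" using s by (simp add: power_divide mult.commute)
  qed (insert s, auto)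
qed

lemma mat_vec_entry:
  fixes M :: "'a :: comm_semiring_0 mat"
  assumes "M \<in> carrier_mat n n" "x \<in> carrier_vec n" "i < n"
  shows "(M *\<^sub>v x) $ i = (\<Sum>j<n. M $$ (i,j) * x $ j)"
  using assms by (auto simp: scalar_prod_def row_def lessThan_atLeast0 intro!: sum.cong)

lemma pow_nonneg:
  fixes B :: "real mat"
  assumes B: "B \<in> carrier_mat n n" and nn: "\<forall>i<n. \<forall>j<n. B $$ (i,j) \<ge> 0"
  shows "\<forall>i<n. \<forall>j<n. (B ^\<^sub>m k) $$ (i,j) \<ge> 0"
proof (induct k)
  case 0 thus ?case using B by auto
next
  case (Suc k)
  show ?case
  proof (intro allI impI)
    fix i j assume ij: "i < n" "j < n"
    have "(B ^\<^sub>m Suc k) $$ (i,j) = (\<Sum>l<n. (B ^\<^sub>m k) $$ (i,l) * B $$ (l,j))"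
      using B ij by (auto simp: scalar_prod_def row_def col_def lessThan_atLeast0 intro!: sum.cong)
    also have "\<dots> \<ge> 0" using Suc nn ij by (intro sum_nonneg) auto
    finally show "(B ^\<^sub>m Suc k) $$ (i,j) \<ge> 0" .
  qed
qed

lemma mat_vec_mono:
  fixes M :: "real mat"
  assumes M: "M \<in> carrier_mat n n" and nn: "\<forall>i<n. \<forall>j<n. M $$ (i,j) \<ge> 0"
    and x: "x \<in> carrier_vec n" and z: "z \<in> carrier_vec n" and le: "\<forall>j<n. x $ j \<le> z $ j"
    and i: "i < n"
  shows "(M *\<^sub>v x) $ i \<le> (M *\<^sub>v z) $ i"
  unfolding mat_vec_entry[OF M x i] mat_vec_entry[OF M z i]
  using nn le i by (intro sum_mono mult_left_mono) auto

lemma sub_inv_nonpos: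
  fixes B :: "real mat"
  assumes B: "B \<in> carrier_mat n n" and nn: "\<forall>i<n. \<forall>j<n. B $$ (i,j) \<ge> 0"
    and sr: "pf_lambda B < 1" and y: "y \<in> carrier_vec n"
    and le: "\<forall>i<n. y $ i \<le> (B *\<^sub>v y) $ i"
  shows "\<forall>i<n. y $ i \<le> 0"
proof -
  from pow_decay[OF B sr] obtain c s where s: "0 \<le> s" "s < 1"
    and cs: "\<And>k i j. i < n \<Longrightarrow> j < n \<Longrightarrow> \<bar>(B ^\<^sub>m k) $$ (i,j)\<bar> \<le> c * s ^ k" by blast
  have Bk: "B ^\<^sub>m k \<in> carrier_mat n n" for k using B by simp
  have iter: "\<forall>i<n. y $ i \<le> (B ^\<^sub>m k *\<^sub>v y) $ i" for k
  proof (induct k)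
    case 0 thus ?case using y B by simp
  next
    case (Suc k)
    have eq: "B ^\<^sub>m Suc k *\<^sub>v y = B ^\<^sub>m k *\<^sub>v (B *\<^sub>v y)"
      using B y by (simp add: assoc_mult_mat_vec[OF Bk B y])
    show ?case
    proof (intro allI impI)
      fix i assume i: "i < n"
      have "y $ i \<le> (B ^\<^sub>m k *\<^sub>v y) $ i" using Suc i by auto
      also have "\<dots> \<le> (B ^\<^sub>m k *\<^sub>v (B *\<^sub>v y)) $ i"
        by (rule mat_vec_mono[OF Bk pow_nonneg[OF B nn] y _ le i]) (use B y in auto)
      finally show "y $ i \<le> (B ^\<^sub>m Suc k *\<^sub>v y) $ i" unfolding eq .
    qed
  qed
  define M where "M = (\<Sum>j<n. \<bar>y $ j\<bar>)"
  have bound: "y $ i \<le> c * s ^ k * M" if i: "i < n" for i k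
  proof -
    have "y $ i \<le> (B ^\<^sub>m k *\<^sub>v y) $ i" using iter i by auto
    also have "\<dots> = (\<Sum>j<n. (B ^\<^sub>m k) $$ (i,j) * y $ j)" by (rule mat_vec_entry[OF Bk y i])
    also have "\<dots> \<le> (\<Sum>j<n. c * s ^ k * \<bar>y $ j\<bar>)"
    proof (rule sum_mono)
      fix j assume "j \<in> {..<n}"
      hence j: "j < n" by auto
      have "(B ^\<^sub>m k) $$ (i,j) * y $ j \<le> \<bar>(B ^\<^sub>m k) $$ (i,j)\<bar> * \<bar>y $ j\<bar>"
        by (metis abs_ge_self abs_mult)
      also have "\<dots> \<le> c * s ^ k * \<bar>y $ j\<bar>" using cs[OF i j] by (intro mult_right_mono) auto
      finally show "(B ^\<^sub>m k) $$ (i,j) * y $ j \<le> c * s ^ k * \<bar>y $ j\<bar>" .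
    qed
    also have "\<dots> = c * s ^ k * M" unfolding M_def by (simp add: sum_distrib_left)
    finally show ?thesis .
  qed
  show ?thesis
  proof (intro allI impI, rule ccontr)
    fix i assume i: "i < n" and "\<not> y $ i \<le> 0"
    hence pos: "y $ i > 0" by auto
    have "(\<lambda>k. c * s ^ k * M) \<longlonglongrightarrow> c * 0 * M"
      using s by (intro tendsto_intros LIMSEQ_power_zero) auto
    hence "(\<lambda>k. c * s ^ k * M) \<longlonglongrightarrow> 0" by simp
    from order_tendstoD(2)[OF this pos] obtain k where "c * s ^ k * M < y $ i"
      by (auto simp: eventually_sequentially)
    with bound[OF i, of k] show False by auto
  qed
qed


lemma one_minus_entry:
  fixes B :: "real mat"
  assumes B: "B \<in> carrier_mat n n" and v: "v \<in> carrier_vec n" and i: "i < n"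
  shows "((1\<^sub>m n - B) *\<^sub>v v) $ i = v $ i - (B *\<^sub>v v) $ i"
proof -
  have E: "1\<^sub>m n - B \<in> carrier_mat n n" using B by (simp add: minus_carrier_mat)
  have "((1\<^sub>m n - B) *\<^sub>v v) $ i = (\<Sum>j<n. (1\<^sub>m n - B) $$ (i,j) * v $ j)" by (rule mat_vec_entry[OF E v i])
  also have "\<dots> = (\<Sum>j<n. (if i = j then v $ j else 0) - B $$ (i,j) * v $ j)"
    using B i by (intro sum.cong) (auto simp: algebra_simps)
  also have "\<dots> = v $ i - (\<Sum>j<n. B $$ (i,j) * v $ j)" using i by (simp add: sum_subtractf)
  also have "\<dots> = v $ i - (B *\<^sub>v v) $ i" using mat_vec_entry[OF B v i] by simp
  finally show ?thesis .
qed

lemma super_nonneg: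
  fixes B :: "real mat"
  assumes B: "B \<in> carrier_mat n n" and nn: "\<forall>i<n. \<forall>j<n. B $$ (i,j) \<ge> 0"
    and sr: "pf_lambda B < 1" and x: "x \<in> carrier_vec n"
    and le: "\<forall>i<n. (B *\<^sub>v x) $ i \<le> x $ i"
  shows "\<forall>i<n. x $ i \<ge> 0"
proof -
  define y where "y = vec n (\<lambda>i. - x $ i)"
  have y: "y \<in> carrier_vec n" unfolding y_def by simp
  have "\<forall>i<n. y $ i \<le> (B *\<^sub>v y) $ i"
  proof (intro allI impI)
    fix i assume i: "i < n"
    have "(B *\<^sub>v y) $ i = - (B *\<^sub>v x) $ i"
      unfolding mat_vec_entry[OF B y i] mat_vec_entry[OF B x i]
      by (simp add: y_def sum_negf[symmetric])
    thus "y $ i \<le> (B *\<^sub>v y) $ i" using le i unfolding y_def by simp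
  qed
  from sub_inv_nonpos[OF B nn sr y this] show ?thesis unfolding y_def by auto
qed

lemma solve_nonneg:
  fixes B :: "real mat"
  assumes B: "B \<in> carrier_mat n n" and nn: "\<forall>i<n. \<forall>j<n. B $$ (i,j) \<ge> 0"
    and sr: "pf_lambda B < 1" and d: "d \<in> carrier_vec n" and dnn: "\<forall>i<n. d $ i \<ge> 0"
  shows "\<exists>x \<in> carrier_vec n. (\<forall>i<n. x $ i = (B *\<^sub>v x) $ i + d $ i) \<and> (\<forall>i<n. x $ i \<ge> 0)"
proof -
  define E where "E = 1\<^sub>m n - B"
  have E: "E \<in> carrier_mat n n" unfolding E_def using B by (simp add: minus_carrier_mat)
  have "det E \<noteq> 0"
  proof
    assume "det E = 0"
    from this[unfolded det_0_iff_vec_prod_zero[OF E]] obtain v where v: "v \<in> carrier_vec n"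
      and v0: "v \<noteq> 0\<^sub>v n" and Ev: "E *\<^sub>v v = 0\<^sub>v n" by auto
    have eq: "(B *\<^sub>v v) $ i = v $ i" if i: "i < n" for i
      using one_minus_entry[OF B v i] arg_cong[OF Ev, of "\<lambda>w. w $ i"] i unfolding E_def by simp
    have p1: "\<forall>i<n. v $ i \<ge> 0" by (rule super_nonneg[OF B nn sr v]) (simp add: eq)
    define w where "w = vec n (\<lambda>i. - v $ i)"
    have w: "w \<in> carrier_vec n" unfolding w_def by simp
    have "\<forall>i<n. w $ i \<ge> 0"
    proof (rule super_nonneg[OF B nn sr w], intro allI impI)
      fix i assume i: "i < n"
      have "(B *\<^sub>v w) $ i = - (B *\<^sub>v v) $ i"
        unfolding mat_vec_entry[OF B w i] mat_vec_entry[OF B v i]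
        by (simp add: w_def sum_negf[symmetric])
      thus "(B *\<^sub>v w) $ i \<le> w $ i" using eq[OF i] i unfolding w_def by simp
    qed
    hence "v = 0\<^sub>v n" using p1 v unfolding w_def by (intro eq_vecI) (auto, force)
    with v0 show False by simp
  qed
  from det_non_zero_imp_unit[OF E this, of "()"]
  obtain Q where Q: "Q \<in> carrier_mat n n" and EQ: "E * Q = 1\<^sub>m n"
    unfolding Units_def ring_mat_def by auto
  define x where "x = Q *\<^sub>v d"
  have x: "x \<in> carrier_vec n" unfolding x_def using Q d by simp
  have "E *\<^sub>v x = d" unfolding x_def using assoc_mult_mat_vec[OF E Q d, symmetric] EQ d by simp
  hence eqs: "\<forall>i<n. x $ i = (B *\<^sub>v x) $ i + d $ i"
    using one_minus_entry[OF B x] unfolding E_def by auto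
  have "\<forall>i<n. x $ i \<ge> 0" by (rule super_nonneg[OF B nn sr x]) (use eqs dnn in force)
  with x eqs show ?thesis by blast
qed


lemma sr_lt_1:
  fixes B :: "real mat"
  assumes B: "B \<in> carrier_mat n n" and n: "n > 0" and nn: "\<forall>i<n. \<forall>j<n. B $$ (i,j) \<ge> 0"
    and p: "p \<in> carrier_vec n" and ppos: "\<forall>i<n. p $ i > 0"
    and lt: "\<forall>i<n. (B *\<^sub>v p) $ i < p $ i"
  shows "pf_lambda B < 1"
proof -
  define C where "C = map_mat complex_of_real B"
  have C: "C \<in> carrier_mat n n" using B unfolding C_def by auto
  from spectral_radius_mem_max(1)[OF C n] obtain e where e: "e \<in> spectrum C"
    and eq: "spectral_radius C = cmod e" by auto
  from e obtain v where ev: "eigenvector C v e" unfolding spectrum_def eigenvalue_def by auto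
  hence v: "v \<in> carrier_vec n" "v \<noteq> 0\<^sub>v n" and Cv: "C *\<^sub>v v = e \<cdot>\<^sub>v v"
    unfolding eigenvector_def using C by auto
  define f where "f i = cmod (v $ i) / p $ i" for i
  define t where "t = Max (f ` {..<n})"
  have fin: "finite (f ` {..<n})" and ne: "f ` {..<n} \<noteq> {}" using n by auto
  from Max_in[OF fin ne] obtain i0 where i0: "i0 < n" and ti0: "t = f i0" unfolding t_def by auto
  have ft: "f j \<le> t" if "j < n" for j unfolding t_def using fin that by auto
  have vj: "cmod (v $ j) \<le> t * p $ j" if j: "j < n" for j
    using ft[OF j] ppos j unfolding f_def by (simp add: divide_le_eq)
  obtain j1 where j1: "j1 < n" "v $ j1 \<noteq> 0"
  proof (rule ccontr)
    assume "\<not> thesis"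
    hence "\<forall>j<n. v $ j = 0" using that by blast
    hence "v = 0\<^sub>v n" using v(1) by (intro eq_vecI) auto
    with v(2) show False by simp
  qed
  have "0 < f j1" using j1 ppos unfolding f_def by auto
  hence tpos: "t > 0" using ft[OF j1(1)] by auto
  have vi0: "cmod (v $ i0) = t * p $ i0" using ti0 ppos i0 unfolding f_def by auto
  have "e * v $ i0 = (C *\<^sub>v v) $ i0" using Cv v i0 by simp
  also have "\<dots> = (\<Sum>j<n. C $$ (i0,j) * v $ j)" by (rule mat_vec_entry[OF C v(1) i0])
  finally have ee: "e * v $ i0 = (\<Sum>j<n. complex_of_real (B $$ (i0,j)) * v $ j)"
    using B i0 unfolding C_def by simp
  have "cmod e * cmod (v $ i0) = cmod (\<Sum>j<n. complex_of_real (B $$ (i0,j)) * v $ j)"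
    using ee by (metis norm_mult)
  also have "\<dots> \<le> (\<Sum>j<n. cmod (complex_of_real (B $$ (i0,j)) * v $ j))" by (rule norm_sum)
  also have "\<dots> = (\<Sum>j<n. B $$ (i0,j) * cmod (v $ j))"
    using nn i0 by (intro sum.cong) (auto simp: norm_mult)
  also have "\<dots> \<le> (\<Sum>j<n. B $$ (i0,j) * (t * p $ j))"
    using nn i0 vj by (intro sum_mono mult_left_mono) auto
  also have "\<dots> = t * (B *\<^sub>v p) $ i0"
    unfolding mat_vec_entry[OF B p i0] by (simp add: sum_distrib_left mult.left_commute)
  also have "\<dots> < t * p $ i0" using lt i0 tpos by auto
  also have "\<dots> = cmod (v $ i0)" using vi0 by simp
  finally have "cmod e * cmod (v $ i0) < 1 * cmod (v $ i0)" by simp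
  moreover have "cmod (v $ i0) > 0" using vi0 tpos ppos i0 by simp
  ultimately have "cmod e < 1" by (simp only: mult_less_cancel_right_pos)
  thus ?thesis unfolding pf_lambda_def C_def[symmetric] eq .
qed


theorem theorem2:
  fixes N :: nat and K :: "nat \<Rightarrow> nat" and g :: "nat \<Rightarrow> nat \<Rightarrow> nat \<Rightarrow> real"
    and sigma2 :: real and mu :: "real vec"
  assumes N2: "N \<ge> 2"
    and K1: "\<forall>i<N. K i \<ge> 1"
    and g_nonneg: "\<forall>i<N. \<forall>k<K i. \<forall>j<N. g i k j \<ge> 0"
    and g_pos: "\<forall>i<N. \<forall>k<K i. g i k i > 0"
    and sigma_pos: "sigma2 > 0"
    and mu_dim: "dim_vec mu = N"
    and mu_pos: "\<forall>i<N. mu $ i > 0"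
    and irred: "\<forall>G\<in>G_set N K g mu. irreducible_mat (1\<^sub>m N - G)"
  shows "(\<exists>p :: real vec. dim_vec p = N \<and> (\<forall>i<N. p $ i \<ge> 0) \<and>
            vec_le (n_vec N K g sigma2 mu) (A_mat N K g mu *\<^sub>v p))
         \<longleftrightarrow> Max (pf_lambda ` (\<lambda>G. 1\<^sub>m N - G) ` G_set N K g mu) < 1"
proof -
  define Gm where "Gm c = mat N N (\<lambda>(i,j). a_entry g mu i (c i) j)" for c :: "nat \<Rightarrow> nat"
  define Bm where "Bm c = 1\<^sub>m N - Gm c" for c
  define aff where "aff i k p = (\<Sum>j<N. a_entry g mu i k j * p $ j)" for i k and p :: "real vec"
  define nn where "nn i k = n_entry g sigma2 mu i k" for i k
  define valid where "valid c \<longleftrightarrow> (\<forall>i<N. c i < K i)" for c :: "nat \<Rightarrow> nat"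
  have N0: "N > 0" using N2 by simp
  have Gc: "Gm c \<in> carrier_mat N N" for c unfolding Gm_def by simp
  have Bc: "Bm c \<in> carrier_mat N N" for c unfolding Bm_def using Gc by (simp add: minus_carrier_mat)
  have Bent: "Bm c $$ (i,j) = (if i = j then 0 else mu $ i * g i (c i) j / g i (c i) i)"
    if "i < N" "j < N" for c i j
    using that unfolding Bm_def Gm_def a_entry_def by auto
  have Bnn: "\<forall>i<N. \<forall>j<N. Bm c $$ (i,j) \<ge> 0" if v: "valid c" for c
  proof (intro allI impI)
    fix i j assume ij: "i < N" "j < N"
    have "c i < K i" using v ij unfolding valid_def by auto
    thus "Bm c $$ (i,j) \<ge> 0" unfolding Bent[OF ij] using ij g_nonneg g_pos mu_pos
      by (auto intro!: divide_nonneg_pos mult_nonneg_nonneg simp: less_imp_le)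
  qed
  have Bv: "(Bm c *\<^sub>v p) $ i = p $ i - aff i (c i) p" if p: "p \<in> carrier_vec N" and i: "i < N" for c p i
  proof -
    have "(Bm c *\<^sub>v p) $ i = p $ i - (Gm c *\<^sub>v p) $ i"
      unfolding Bm_def by (rule one_minus_entry[OF Gc p i])
    also have "(Gm c *\<^sub>v p) $ i = aff i (c i) p" unfolding mat_vec_entry[OF Gc p i] aff_def
      using i by (intro sum.cong) (auto simp: Gm_def)
    finally show ?thesis .
  qed
  have npos: "nn i k > 0" if "i < N" "k < K i" for i k
    using that g_pos mu_pos sigma_pos unfolding nn_def n_entry_def by auto
  have affle: "aff i k p \<le> p $ i" if p: "p \<in> carrier_vec N" "\<forall>j<N. p $ j \<ge> 0" and ik: "i < N" "k < K i" for i k p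
  proof -
    define c where "c = (\<lambda>i'. if i' = i then k else 0)"
    have v: "valid c" unfolding valid_def c_def using ik K1 by auto
    have "0 \<le> (Bm c *\<^sub>v p) $ i" unfolding mat_vec_entry[OF Bc p(1) ik(1)]
      using Bnn[OF v] p ik by (intro sum_nonneg mult_nonneg_nonneg) auto
    thus ?thesis unfolding Bv[OF p(1) ik(1)] c_def by simp
  qed
  have rx: "set (rx_list N K) = {(i,k). i < N \<and> k < K i}" unfolding rx_list_def by auto
  have feas: "vec_le (n_vec N K g sigma2 mu) (A_mat N K g mu *\<^sub>v p) \<longleftrightarrow> (\<forall>i<N. \<forall>k<K i. nn i k \<le> aff i k p)"
    if p: "p \<in> carrier_vec N" for p
  proof -
    have entry: "(A_mat N K g mu *\<^sub>v p) $ r = aff (fst (rx_list N K ! r)) (snd (rx_list N K ! r)) p"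
      and nentry: "n_vec N K g sigma2 mu $ r = nn (fst (rx_list N K ! r)) (snd (rx_list N K ! r))"
      if r: "r < length (rx_list N K)" for r
    proof -
      obtain i k where ik: "rx_list N K ! r = (i,k)" by fastforce
      show "(A_mat N K g mu *\<^sub>v p) $ r = aff (fst (rx_list N K ! r)) (snd (rx_list N K ! r)) p"
        using r p unfolding A_mat_def aff_def
        by (auto simp: ik scalar_prod_def lessThan_atLeast0 intro!: sum.cong)
      show "n_vec N K g sigma2 mu $ r = nn (fst (rx_list N K ! r)) (snd (rx_list N K ! r))"
        using r unfolding n_vec_def nn_def by (auto simp: ik)
    qed
    have dims: "dim_vec (n_vec N K g sigma2 mu) = length (rx_list N K)"
      "dim_vec (A_mat N K g mu *\<^sub>v p) = length (rx_list N K)"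
      unfolding n_vec_def A_mat_def by auto
    show ?thesis
    proof
      assume le: "vec_le (n_vec N K g sigma2 mu) (A_mat N K g mu *\<^sub>v p)"
      show "\<forall>i<N. \<forall>k<K i. nn i k \<le> aff i k p"
      proof (intro allI impI)
        fix i k assume "i < N" "k < K i"
        hence "(i,k) \<in> set (rx_list N K)" unfolding rx by auto
        then obtain r where r: "r < length (rx_list N K)" "rx_list N K ! r = (i,k)"
          by (auto simp: in_set_conv_nth)
        from le r have "n_vec N K g sigma2 mu $ r \<le> (A_mat N K g mu *\<^sub>v p) $ r"
          unfolding vec_le_def dims by auto
        thus "nn i k \<le> aff i k p" unfolding entry[OF r(1)] nentry[OF r(1)] r(2) by simp
      qed
    next
      assume H: "\<forall>i<N. \<forall>k<K i. nn i k \<le> aff i k p"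
      show "vec_le (n_vec N K g sigma2 mu) (A_mat N K g mu *\<^sub>v p)"
        unfolding vec_le_def dims
      proof (intro conjI allI impI refl)
        fix r assume r: "r < length (rx_list N K)"
        hence "rx_list N K ! r \<in> {(i,k). i < N \<and> k < K i}" unfolding rx[symmetric] by simp
        thus "n_vec N K g sigma2 mu $ r \<le> (A_mat N K g mu *\<^sub>v p) $ r"
          unfolding entry[OF r] nentry[OF r] using H by auto
      qed
    qed
  qed
  have Gset: "G_set N K g mu = Gm ` {c. valid c}" unfolding G_set_def Gm_def valid_def by auto
  define Cs where "Cs = PiE {..<N} (\<lambda>i. {..<K i})"
  have Csv: "valid c" if "c \<in> Cs" for c using that unfolding Cs_def valid_def by auto
  have Gres: "Gm c = Gm (restrict c {..<N})" for c unfolding Gm_def by (intro eq_matI) auto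
  have Gset2: "G_set N K g mu = Gm ` Cs"
  proof -
    have "Gm ` {c. valid c} = Gm ` Cs"
    proof
      show "Gm ` {c. valid c} \<subseteq> Gm ` Cs"
      proof
        fix G assume "G \<in> Gm ` {c. valid c}"
        then obtain c where c: "valid c" "G = Gm c" by auto
        have "restrict c {..<N} \<in> Cs" using c(1) unfolding Cs_def valid_def by auto
        thus "G \<in> Gm ` Cs" using c(2) Gres[of c] by auto
      qed
    qed (use Csv in auto)
    thus ?thesis using Gset by simp
  qed
  have finCs: "finite Cs" unfolding Cs_def by (intro finite_PiE) auto
  have neCs: "Cs \<noteq> {}"
  proof -
    have "restrict (\<lambda>_. 0) {..<N} \<in> Cs" unfolding Cs_def using K1 by auto
    thus ?thesis by auto
  qed
  have Sset: "pf_lambda ` (\<lambda>G. 1\<^sub>m N - G) ` G_set N K g mu = (\<lambda>c. pf_lambda (Bm c)) ` Cs"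
    unfolding Gset2 Bm_def by (simp add: image_image)
  have maxiff: "Max (pf_lambda ` (\<lambda>G. 1\<^sub>m N - G) ` G_set N K g mu) < 1 \<longleftrightarrow> (\<forall>c\<in>Cs. pf_lambda (Bm c) < 1)"
    unfolding Sset using finCs neCs by (subst Max_less_iff) auto
  have lhs: "(\<exists>p :: real vec. dim_vec p = N \<and> (\<forall>i<N. p $ i \<ge> 0) \<and>
            vec_le (n_vec N K g sigma2 mu) (A_mat N K g mu *\<^sub>v p))
     \<longleftrightarrow> (\<exists>p. p \<in> carrier_vec N \<and> (\<forall>i<N. p $ i \<ge> 0) \<and> (\<forall>i<N. \<forall>k<K i. nn i k \<le> aff i k p))"
    using feas unfolding carrier_vec_def by auto
  show ?thesis unfolding lhs maxiff
  proof
    assume "\<exists>p. p \<in> carrier_vec N \<and> (\<forall>i<N. p $ i \<ge> 0) \<and> (\<forall>i<N. \<forall>k<K i. nn i k \<le> aff i k p)"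
    then obtain p where p: "p \<in> carrier_vec N" "\<forall>i<N. p $ i \<ge> 0"
      and pf: "\<forall>i<N. \<forall>k<K i. nn i k \<le> aff i k p" by blast
    show "\<forall>c\<in>Cs. pf_lambda (Bm c) < 1"
    proof
      fix c assume c: "c \<in> Cs"
      have v: "valid c" using Csv[OF c] .
      have ci: "c i < K i" if "i < N" for i using v that unfolding valid_def by auto
      have ppos: "\<forall>i<N. p $ i > 0"
      proof (intro allI impI)
        fix i assume i: "i < N"
        have "0 < nn i (c i)" by (rule npos[OF i ci[OF i]])
        also have "\<dots> \<le> aff i (c i) p" using pf i ci[OF i] by auto
        also have "\<dots> \<le> p $ i" by (rule affle[OF p i ci[OF i]])
        finally show "p $ i > 0" .
      qed
      have lt: "\<forall>i<N. (Bm c *\<^sub>v p) $ i < p $ i"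
      proof (intro allI impI)
        fix i assume i: "i < N"
        have "0 < nn i (c i)" by (rule npos[OF i ci[OF i]])
        also have "\<dots> \<le> aff i (c i) p" using pf i ci[OF i] by auto
        finally show "(Bm c *\<^sub>v p) $ i < p $ i" unfolding Bv[OF p(1) i] by simp
      qed
      show "pf_lambda (Bm c) < 1" by (rule sr_lt_1[OF Bc N0 Bnn[OF v] p(1) ppos lt])
    qed
  next
    assume sr: "\<forall>c\<in>Cs. pf_lambda (Bm c) < 1"
    define nv where "nv c = vec N (\<lambda>i. nn i (c i))" for c :: "nat \<Rightarrow> nat"
    have "\<forall>c\<in>Cs. \<exists>x. x \<in> carrier_vec N \<and> (\<forall>i<N. x $ i = (Bm c *\<^sub>v x) $ i + nv c $ i) \<and> (\<forall>i<N. x $ i \<ge> 0)"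
    proof
      fix c assume c: "c \<in> Cs"
      have v: "valid c" using Csv[OF c] .
      have "\<forall>i<N. nv c $ i \<ge> 0" unfolding nv_def using npos v unfolding valid_def
        by (auto simp: less_imp_le)
      from solve_nonneg[OF Bc Bnn[OF v] sr[rule_format, OF c] _ this]
      show "\<exists>x. x \<in> carrier_vec N \<and> (\<forall>i<N. x $ i = (Bm c *\<^sub>v x) $ i + nv c $ i) \<and> (\<forall>i<N. x $ i \<ge> 0)"
        unfolding nv_def by auto
    qed
    from bchoice[OF this] obtain X where X: "\<And>c. c \<in> Cs \<Longrightarrow> X c \<in> carrier_vec N"
      "\<And>c i. c \<in> Cs \<Longrightarrow> i < N \<Longrightarrow> X c $ i = (Bm c *\<^sub>v X c) $ i + nv c $ i"
      "\<And>c i. c \<in> Cs \<Longrightarrow> i < N \<Longrightarrow> X c $ i \<ge> 0" by blast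
    have Xaff: "aff i (c i) (X c) = nn i (c i)" if c: "c \<in> Cs" and i: "i < N" for c i
      using X(2)[OF c i] unfolding Bv[OF X(1)[OF c] i] nv_def using i by simp
    define S where "S c = (\<Sum>i<N. X c $ i)" for c
    have finS: "finite (S ` Cs)" using finCs by simp
    have neS: "S ` Cs \<noteq> {}" using neCs by simp
    from Max_in[OF finS neS] obtain cs where cs: "cs \<in> Cs" "S cs = Max (S ` Cs)" by auto
    have Smax: "S c \<le> S cs" if "c \<in> Cs" for c using Max_ge[OF finS] that cs by auto
    define p where "p = X cs"
    have p: "p \<in> carrier_vec N" "\<forall>i<N. p $ i \<ge> 0" unfolding p_def using X cs by auto
    have "\<forall>i<N. \<forall>k<K i. nn i k \<le> aff i k p"
    proof (intro allI impI, rule ccontr)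
      fix i0 k0 assume i0: "i0 < N" and k0: "k0 < K i0" and "\<not> nn i0 k0 \<le> aff i0 k0 p"
      hence bad: "aff i0 k0 p < nn i0 k0" by simp
      define c' where "c' = cs(i0 := k0)"
      have c': "c' \<in> Cs" using cs(1) i0 k0 unfolding c'_def Cs_def by (auto simp: PiE_iff extensional_def)
      define x' where "x' = X c'"
      have x': "x' \<in> carrier_vec N" unfolding x'_def using X(1)[OF c'] .
      define z where "z = vec N (\<lambda>i. x' $ i - p $ i)"
      have z: "z \<in> carrier_vec N" unfolding z_def by simp
      have Bz: "(Bm c' *\<^sub>v z) $ i = (Bm c' *\<^sub>v x') $ i - (Bm c' *\<^sub>v p) $ i" if i: "i < N" for i
        unfolding mat_vec_entry[OF Bc z i] mat_vec_entry[OF Bc x' i] mat_vec_entry[OF Bc p(1) i]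
        by (simp add: z_def sum_subtractf[symmetric] algebra_simps)
      have Bx': "(Bm c' *\<^sub>v x') $ i = x' $ i - nn i (c' i)" if i: "i < N" for i
        using X(2)[OF c' i] i unfolding x'_def nv_def by simp
      have le: "\<forall>i<N. (Bm c' *\<^sub>v z) $ i \<le> z $ i"
      proof (intro allI impI)
        fix i assume i: "i < N"
        show "(Bm c' *\<^sub>v z) $ i \<le> z $ i"
        proof (cases "i = i0")
          case True
          have "(Bm c' *\<^sub>v p) $ i = p $ i - aff i0 k0 p" using Bv[OF p(1) i, of c'] True unfolding c'_def by simp
          thus ?thesis unfolding Bz[OF i] Bx'[OF i] using bad i True unfolding z_def c'_def by simp
        next
          case False
          have "(Bm c' *\<^sub>v p) $ i = p $ i - nn i (c' i)"
            unfolding Bv[OF p(1) i] using False Xaff[OF cs(1) i] unfolding c'_def p_def by simp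
          thus ?thesis unfolding Bz[OF i] Bx'[OF i] using i unfolding z_def by simp
        qed
      qed
      have znn: "\<forall>i<N. z $ i \<ge> 0" by (rule super_nonneg[OF Bc Bnn[OF Csv[OF c']] sr[rule_format, OF c'] z le])
      have "(Bm c' *\<^sub>v p) $ i0 = p $ i0 - aff i0 k0 p" unfolding Bv[OF p(1) i0] c'_def by simp
      hence "(Bm c' *\<^sub>v z) $ i0 < z $ i0" unfolding Bz[OF i0] Bx'[OF i0] using bad i0 unfolding z_def c'_def by simp
      moreover have "0 \<le> (Bm c' *\<^sub>v z) $ i0" unfolding mat_vec_entry[OF Bc z i0]
        using Bnn[OF Csv[OF c']] znn i0 by (intro sum_nonneg mult_nonneg_nonneg) auto
      ultimately have zi0: "z $ i0 > 0" by simp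
      have "S c' - S cs = (\<Sum>i<N. z $ i)" unfolding S_def z_def x'_def p_def
        by (simp add: sum_subtractf)
      also have "\<dots> \<ge> z $ i0" using znn i0 by (intro member_le_sum) auto
      finally have "S c' > S cs" using zi0 by simp
      with Smax[OF c'] show False by simp
    qed
    with p show "\<exists>p. p \<in> carrier_vec N \<and> (\<forall>i<N. p $ i \<ge> 0) \<and> (\<forall>i<N. \<forall>k<K i. nn i k \<le> aff i k p)" by blast
  qed
qed

end
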